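(* Consider Algorithm MWHVC (described in the context) run on a hypergraph $G=(V,E)$ of rank $f$ with nonnegative vertex weights $w$, with parameters $\varepsilon\in(0,1]$, $\beta=\varepsilon/(f+\varepsilon)$ and multiplier $\alpha>1$. Upon termination, the set $C$ is a vertex cover of $G$ (every hyperedge intersects $C$) and $w(C)\le (f+\varepsilon)\cdot\mathrm{opt}$, where $\mathrm{opt}$ is the cost of an optimal fractional weighted vertex cover of $G$; i.e. the approximation ratio of the algorithm is $f+\varepsilon$.
   Context: Let $G=(V,E)$ be a hypergraph: each hyperedge is a nonempty subset of $V$ of size at most $f$ (rank $f$). Vertices have nonnegative weights $w(v)$, and $w(U)=\sum_{v\in U}w(v)$. For $v\in V$, $E(v)=\{e\in E: v\in e\}$; $\Delta=\max_v |E(v)|\ge 3$. A hyperedge $e$ is covered by $C\subseteq V$ if $e\cap C\neq\emptyset$. The optimal fractional vertex cover value $\mathrm{opt}$ is the minimum of $\sum_v w(v)x(v)$ subject to $\sum_{v\in e}x(v)\ge 1$ for all $e\in E$ and $x\ge 0$. The computation is distributed in synchronous rounds on the bipartite network with node set $V\cup E$ and a link between $v$ and $e$ iff $v\in e$. Parameters: $\varepsilon\in(0,1]$, $\beta=\varepsilon/(f+\varepsilon)$, and a multiplier $\alpha>1$. Algorithm MWHVC: Initialize $C\gets\emptyset$ and $E'(v)\gets E(v)$ for every $v$. Iteration $0$: every hyperedge $e$ sets $\mathrm{deal}_0(e)=\beta\cdot\min_{v\in e} w(v)/|E(v)|$ and $\delta_0(e)=\mathrm{deal}_0(e)$. For $i=1,2,\dots$: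 (a) every vertex $v\notin C$ (not terminated) checks whether $\sum_{e\in E(v)}\delta_{i-1}(e)\ge(1-\beta)w(v)$; if so, $v$ joins $C$, tells every $e\in E'(v)$ that $e$ is covered, and terminates. (b) Every uncovered hyperedge that receives such a message becomes covered, informs all its vertices, and terminates. (c) Every vertex $v\notin C$ that is told $e$ is covered sets $E'(v)\gets E'(v)\setminus\{e\}$; if $E'(v)=\emptyset$, $v$ terminates without joining $C$. (d) Every vertex $v\notin C$ sends "raise" to all $e\in E'(v)$ if $\sum_{e\in E'(v)}\mathrm{deal}_{i-1}(e)\le(\beta/\alpha)w(v)$, and otherwise sends "stuck" to all $e\in E'(v)$. (e) Every uncovered hyperedge $e$ sets $\mathrm{deal}_i(e)=\mathrm{deal}_{i-1}(e)$ if it received some "stuck" message, and $\mathrm{deal}_i(e)=\alpha\cdot\mathrm{deal}_{i-1}(e)$ otherwise, and $\delta_i(e)=\delta_{i-1}(e)+\mathrm{deal}_i(e)$. A vertex terminates when it is in $C$ or all its hyperedges are covered; a hyperedge terminates when covered. *)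

theory Defs
  imports Complex_Main
begin

definition Eset :: "'v set set \<Rightarrow> 'v \<Rightarrow> 'v set set" where
  "Eset E v = {e \<in> E. v \<in> e}"

definition max_degree :: "'v set \<Rightarrow> 'v set set \<Rightarrow> nat" where
  "max_degree V E = Max ((\<lambda>v. card (Eset E v)) ` V)"

definition frac_cover :: "'v set set \<Rightarrow> ('v \<Rightarrow> real) \<Rightarrow> bool" where
  "frac_cover E x \<longleftrightarrow> (\<forall>v. x v \<ge> 0) \<and> (\<forall>e\<in>E. (\<Sum>v\<in>e. x v) \<ge> 1)"

definition opt_frac :: "'v set \<Rightarrow> 'v set set \<Rightarrow> ('v \<Rightarrow> real) \<Rightarrow> real" where
  "opt_frac V E w = Inf {(\<Sum>v\<in>V. w v * x v) | x. frac_cover E x}"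

record 'v mwhvc_state =
  inC :: "'v set"
  trm :: "'v set"
  cov :: "'v set set"          \<comment> \<open>covered (terminated) hyperedges\<close>
  Ep  :: "'v \<Rightarrow> 'v set set"
  deal :: "'v set \<Rightarrow> real"
  dlt :: "'v set \<Rightarrow> real"

definition deal0 :: "'v set set \<Rightarrow> ('v \<Rightarrow> real) \<Rightarrow> real \<Rightarrow> 'v set \<Rightarrow> real" where
  "deal0 E w \<beta> e = \<beta> * Min ((\<lambda>v. w v / real (card (Eset E v))) ` e)"

text \<open>State after iteration 0. Vertices with no hyperedges are terminated (all their
  hyperedges are vacuously covered).\<close>
definition mwhvc_init :: "'v set \<Rightarrow> 'v set set \<Rightarrow> ('v \<Rightarrow> real) \<Rightarrow> real \<Rightarrow> 'v mwhvc_state" where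
  "mwhvc_init V E w \<beta> =
     \<lparr> inC = {}, trm = {v \<in> V. Eset E v = {}}, cov = {}, Ep = Eset E,
       deal = deal0 E w \<beta>, dlt = deal0 E w \<beta> \<rparr>"

definition mwhvc_step :: "'v set \<Rightarrow> 'v set set \<Rightarrow> ('v \<Rightarrow> real) \<Rightarrow> real \<Rightarrow> real
    \<Rightarrow> 'v mwhvc_state \<Rightarrow> 'v mwhvc_state" where
  "mwhvc_step V E w \<beta> \<alpha> s = (let
     J = {v \<in> V. v \<notin> trm s \<and> (\<Sum>e\<in>Eset E v. dlt s e) \<ge> (1 - \<beta>) * w v};
     N = {e \<in> E. e \<notin> cov s \<and> (\<exists>v\<in>J. e \<in> Ep s v)};
     act = V - trm s - J;
     Ep' = (\<lambda>v. if v \<in> act then Ep s v - N else Ep s v);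
     trm' = trm s \<union> J \<union> {v \<in> act. Ep' v = {}};
     cov' = cov s \<union> N;
     A = V - trm';
     raise = (\<lambda>v. (\<Sum>e\<in>Ep' v. deal s e) \<le> (\<beta> / \<alpha>) * w v);
     deal' = (\<lambda>e. if e \<in> E \<and> e \<notin> cov' \<and> \<not> (\<exists>v\<in>A. e \<in> Ep' v \<and> \<not> raise v)
                  then \<alpha> * deal s e else deal s e);
     dlt' = (\<lambda>e. if e \<in> E \<and> e \<notin> cov' then dlt s e + deal' e else dlt s e)
   in \<lparr> inC = inC s \<union> J, trm = trm', cov = cov', Ep = Ep', deal = deal', dlt = dlt' \<rparr>)"

primrec mwhvc :: "'v set \<Rightarrow> 'v set set \<Rightarrow> ('v \<Rightarrow> real) \<Rightarrow> real \<Rightarrow> real \<Rightarrow> nat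
    \<Rightarrow> 'v mwhvc_state" where
  "mwhvc V E w \<beta> \<alpha> 0 = mwhvc_init V E w \<beta>"
| "mwhvc V E w \<beta> \<alpha> (Suc i) = mwhvc_step V E w \<beta> \<alpha> (mwhvc V E w \<beta> \<alpha> i)"

definition mwhvc_terminated :: "'v set \<Rightarrow> 'v set set \<Rightarrow> 'v mwhvc_state \<Rightarrow> bool" where
  "mwhvc_terminated V E s \<longleftrightarrow> V \<subseteq> trm s \<and> E \<subseteq> cov s"

end

theory Submission
  imports Defs
begin

definition minv :: "'v set \<Rightarrow> 'v set set \<Rightarrow> ('v \<Rightarrow> real) \<Rightarrow> real \<Rightarrow> 'v mwhvc_state \<Rightarrow> bool" where
"minv V E w \<beta> s \<longleftrightarrow>
 trm s \<subseteq> V \<and> cov s \<subseteq> E \<and>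
 (\<forall>e\<in>E. 0 \<le> deal s e \<and> 0 \<le> dlt s e) \<and>
 (\<forall>v\<in>V. Ep s v \<subseteq> Eset E v) \<and>
 (\<forall>v\<in>V - trm s. Eset E v - cov s \<subseteq> Ep s v) \<and>
 (\<forall>v\<in>V - trm s. (\<Sum>e\<in>Ep s v. deal s e) \<le> \<beta> * w v) \<and>
 (\<forall>v\<in>V. (\<Sum>e\<in>Eset E v. dlt s e) \<le> w v) \<and>
 (\<forall>v\<in>trm s. Eset E v \<subseteq> cov s) \<and>
 (\<forall>v\<in>V. Eset E v = {} \<longrightarrow> v \<in> trm s) \<and>
 (\<forall>v\<in>inC s. v \<in> V \<and> Eset E v \<noteq> {} \<and> (1-\<beta>) * w v \<le> (\<Sum>e\<in>Eset E v. dlt s e)) \<and>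
 (\<forall>e\<in>cov s. e \<inter> inC s \<noteq> {}) \<and> inC s \<subseteq> trm s"

lemma finE: assumes "finite V" "\<forall>e\<in>E. e \<subseteq> V" shows "finite E"
proof -
  have "E \<subseteq> Pow V" using assms(2) by auto
  thus ?thesis using assms(1) by (metis finite_Pow_iff finite_subset)
qed

lemma finEset: assumes "finite E" shows "finite (Eset E v)"
  using assms unfolding Eset_def by auto

lemma Eset_sub: "Eset E v \<subseteq> E" unfolding Eset_def by auto

lemma inv_init:
  assumes fV: "finite V" and hE: "\<forall>e\<in>E. e \<noteq> {} \<and> e \<subseteq> V"
    and hw: "\<forall>v\<in>V. w v \<ge> 0" and b0: "0 \<le> \<beta>" and b1: "\<beta> \<le> 1"
  shows "minv V E w \<beta> (mwhvc_init V E w \<beta>)"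
proof -
  have fE: "finite E" using finE fV hE by blast
  have nn: "0 \<le> deal0 E w \<beta> e" if "e \<in> E" for e
  proof -
    have fe: "finite e" using that hE fV finite_subset by blast
    have "0 \<le> Min ((\<lambda>v. w v / real (card (Eset E v))) ` e)"
      using fe hE that hw by (subst Min_ge_iff) (auto intro!: divide_nonneg_nonneg)
    thus ?thesis unfolding deal0_def using b0 by simp
  qed
  have le: "deal0 E w \<beta> e \<le> \<beta> * (w v / real (card (Eset E v)))" if "e \<in> E" "v \<in> e" for e v
  proof -
    have fe: "finite e" using that hE fV finite_subset by blast
    have "Min ((\<lambda>v. w v / real (card (Eset E v))) ` e) \<le> w v / real (card (Eset E v))"
      using fe that by (intro Min_le) auto
    thus ?thesis unfolding deal0_def using b0 by (rule mult_left_mono)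
  qed
  have sm: "(\<Sum>e\<in>Eset E v. deal0 E w \<beta> e) \<le> \<beta> * w v" if "v \<in> V" "Eset E v \<noteq> {}" for v
  proof -
    have fs: "finite (Eset E v)" by (rule finEset[OF fE])
    have c: "card (Eset E v) > 0" using fs that(2) card_gt_0_iff by blast
    have "(\<Sum>e\<in>Eset E v. deal0 E w \<beta> e) \<le> (\<Sum>e\<in>Eset E v. \<beta> * (w v / real (card (Eset E v))))"
    proof (rule sum_mono)
      fix e assume "e \<in> Eset E v"
      hence "e \<in> E" "v \<in> e" unfolding Eset_def by auto
      thus "deal0 E w \<beta> e \<le> \<beta> * (w v / real (card (Eset E v)))" by (rule le)
    qed
    also have "\<dots> = real (card (Eset E v)) * (\<beta> * (w v / real (card (Eset E v))))"
      by (rule sum_constant)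
    also have "\<dots> = \<beta> * w v" using c by simp
    finally show ?thesis .
  qed
  have s7: "(\<Sum>e\<in>Eset E v. deal0 E w \<beta> e) \<le> w v" if "v \<in> V" for v
  proof (cases "Eset E v = {}")
    case True thus ?thesis using hw that by simp
  next
    case False
    have "\<beta> * w v \<le> w v" using b0 b1 hw that by (simp add: mult_left_le_one_le)
    thus ?thesis using sm[OF that False] by linarith
  qed
  have s8: "\<forall>v\<in>{v \<in> V. Eset E v = {}}. Eset E v \<subseteq> {}" by auto
  show ?thesis unfolding minv_def mwhvc_init_def mwhvc_state.simps
  proof (intro conjI)
    show "\<forall>v\<in>V - {v \<in> V. Eset E v = {}}. (\<Sum>e\<in>Eset E v. deal0 E w \<beta> e) \<le> \<beta> * w v"
      using sm by blast
    show "\<forall>v\<in>V. (\<Sum>e\<in>Eset E v. deal0 E w \<beta> e) \<le> w v" using s7 by blast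
    show "\<forall>e\<in>E. 0 \<le> deal0 E w \<beta> e \<and> 0 \<le> deal0 E w \<beta> e" using nn by blast
  qed blast+
qed

lemma inv_step:
  assumes fV: "finite V" and hE: "\<forall>e\<in>E. e \<noteq> {} \<and> e \<subseteq> V"
    and hw: "\<forall>v\<in>V. w v \<ge> 0" and b0: "0 \<le> \<beta>" and b1: "\<beta> \<le> 1" and a1: "1 \<le> \<alpha>"
    and I: "minv V E w \<beta> s"
  shows "minv V E w \<beta> (mwhvc_step V E w \<beta> \<alpha> s)"
proof -
  have fE: "finite E" using finE fV hE by blast
  have fEs: "finite (Eset E v)" for v by (rule finEset[OF fE])
  define J where "J = {v \<in> V. v \<notin> trm s \<and> (\<Sum>e\<in>Eset E v. dlt s e) \<ge> (1 - \<beta>) * w v}"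
  define N where "N = {e \<in> E. e \<notin> cov s \<and> (\<exists>v\<in>J. e \<in> Ep s v)}"
  define act where "act = V - trm s - J"
  define Ep' where "Ep' = (\<lambda>v. if v \<in> act then Ep s v - N else Ep s v)"
  define trm' where "trm' = trm s \<union> J \<union> {v \<in> act. Ep' v = {}}"
  define cov' where "cov' = cov s \<union> N"
  define A where "A = V - trm'"
  define rz where "rz = (\<lambda>v. (\<Sum>e\<in>Ep' v. deal s e) \<le> (\<beta> / \<alpha>) * w v)"
  define deal' where "deal' = (\<lambda>e. if e \<in> E \<and> e \<notin> cov' \<and> \<not> (\<exists>v\<in>A. e \<in> Ep' v \<and> \<not> rz v)
                  then \<alpha> * deal s e else deal s e)"
  define dlt' where "dlt' = (\<lambda>e. if e \<in> E \<and> e \<notin> cov' then dlt s e + deal' e else dlt s e)"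
  have eq: "mwhvc_step V E w \<beta> \<alpha> s = \<lparr>inC = inC s \<union> J, trm = trm', cov = cov', Ep = Ep', deal = deal', dlt = dlt'\<rparr>"
    unfolding mwhvc_step_def Let_def J_def N_def act_def Ep'_def trm'_def cov'_def A_def rz_def deal'_def dlt'_def
    by (rule refl)
  have I1: "trm s \<subseteq> V" and I2: "cov s \<subseteq> E"
    and I3: "\<forall>e\<in>E. 0 \<le> deal s e \<and> 0 \<le> dlt s e"
    and I4: "\<forall>v\<in>V. Ep s v \<subseteq> Eset E v"
    and I5: "\<forall>v\<in>V - trm s. Eset E v - cov s \<subseteq> Ep s v"
    and I6: "\<forall>v\<in>V - trm s. (\<Sum>e\<in>Ep s v. deal s e) \<le> \<beta> * w v"
    and I7: "\<forall>v\<in>V. (\<Sum>e\<in>Eset E v. dlt s e) \<le> w v"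
    and I8: "\<forall>v\<in>trm s. Eset E v \<subseteq> cov s"
    and I9: "\<forall>v\<in>V. Eset E v = {} \<longrightarrow> v \<in> trm s"
    and I10: "\<forall>v\<in>inC s. v \<in> V \<and> Eset E v \<noteq> {} \<and> (1-\<beta>) * w v \<le> (\<Sum>e\<in>Eset E v. dlt s e)"
    and I11: "\<forall>e\<in>cov s. e \<inter> inC s \<noteq> {}" and I12: "inC s \<subseteq> trm s"
    using I unfolding minv_def apply - apply (elim conjE; assumption)+ done
  have a0: "0 < \<alpha>" using a1 by simp
  have dealnn: "0 \<le> deal' e" if "e \<in> E" for e using I3 that a0 unfolding deal'_def by auto
  have deal_le: "deal' e \<le> \<alpha> * deal s e" if "e \<in> E" for e
    using I3 that a1 unfolding deal'_def by (auto simp: mult_le_cancel_right1)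
  have dltnn: "0 \<le> dlt' e" if "e \<in> E" for e using I3 that dealnn unfolding dlt'_def by auto
  have dlt_eq: "dlt' e = dlt s e" if "e \<in> cov'" for e using that unfolding dlt'_def by auto
  have trm'V: "trm' \<subseteq> V" using I1 unfolding trm'_def J_def act_def by auto
  have cov'E: "cov' \<subseteq> E" using I2 unfolding cov'_def N_def by auto
  have Ep'sub: "Ep' v \<subseteq> Ep s v" for v unfolding Ep'_def by auto
  have covtrm: "Eset E v \<subseteq> cov'" if vt: "v \<in> trm'" for v
  proof
    fix e assume e: "e \<in> Eset E v"
    show "e \<in> cov'"
    proof (cases "e \<in> cov s")
      case True thus ?thesis unfolding cov'_def by auto
    next
      case False
      have eE: "e \<in> E" using e unfolding Eset_def by simp
      consider "v \<in> trm s" | "v \<in> J" | "v \<in> act" "Ep' v = {}" using vt unfolding trm'_def by blast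
      thus ?thesis
      proof cases
        case 1 thus ?thesis using I8 e unfolding cov'_def by auto
      next
        case 2
        hence "v \<in> V - trm s" unfolding J_def by auto
        hence "e \<in> Ep s v" using I5 e False by auto
        thus ?thesis using 2 eE False unfolding cov'_def N_def by auto
      next
        case 3
        hence "v \<in> V - trm s" unfolding act_def by auto
        hence "e \<in> Ep s v" using I5 e False by auto
        hence "e \<in> N" using 3 unfolding Ep'_def by auto
        thus ?thesis unfolding cov'_def by auto
      qed
    qed
  qed
  have uncov: "Eset E v - cov' \<subseteq> Ep' v" if "v \<in> act" for v
  proof
    fix e assume e: "e \<in> Eset E v - cov'"
    have "v \<in> V - trm s" using that unfolding act_def by auto
    hence "e \<in> Ep s v" using I5 e unfolding cov'_def by auto
    thus "e \<in> Ep' v" using e that unfolding Ep'_def cov'_def by auto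
  qed
  have key: "(\<Sum>e\<in>Ep' v. deal' e) \<le> \<beta> * w v" if "v \<in> act" for v
  proof -
    have vV: "v \<in> V" "v \<notin> trm s" using that unfolding act_def by auto
    have EpE: "Ep s v \<subseteq> Eset E v" using I4 vV(1) by simp
    have finEp: "finite (Ep s v)" using EpE fEs by (rule finite_subset)
    have EpE2: "Ep s v \<subseteq> E" using EpE Eset_sub by (rule subset_trans)
    have subE: "Ep' v \<subseteq> E" using Ep'sub EpE2 by (rule subset_trans)
    show ?thesis
    proof (cases "Ep' v = {}")
      case True thus ?thesis using hw b0 vV by simp
    next
      case ne: False
      hence vA: "v \<in> A" using vV that unfolding A_def trm'_def act_def by auto
      show ?thesis
      proof (cases "rz v")
        case True
        have "(\<Sum>e\<in>Ep' v. deal' e) \<le> (\<Sum>e\<in>Ep' v. \<alpha> * deal s e)"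
          using subE deal_le by (intro sum_mono) auto
        also have "\<dots> = \<alpha> * (\<Sum>e\<in>Ep' v. deal s e)" by (simp add: sum_distrib_left)
        also have "\<dots> \<le> \<alpha> * ((\<beta> / \<alpha>) * w v)" using True a0 unfolding rz_def by (intro mult_left_mono) auto
        also have "\<dots> = \<beta> * w v" using a0 by simp
        finally show ?thesis .
      next
        case False
        have "(\<Sum>e\<in>Ep' v. deal' e) = (\<Sum>e\<in>Ep' v. deal s e)"
          using vA False unfolding deal'_def by (intro sum.cong) auto
        also have "\<dots> \<le> (\<Sum>e\<in>Ep s v. deal s e)"
        proof (rule sum_mono2[OF finEp Ep'sub])
          fix b assume "b \<in> Ep s v - Ep' v"
          hence "b \<in> E" using EpE2 by auto
          thus "0 \<le> deal s b" using I3 by simp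
        qed
        also have "\<dots> \<le> \<beta> * w v" using I6 vV by auto
        finally show ?thesis .
      qed
    qed
  qed
  have P4: "\<forall>v\<in>V. Ep' v \<subseteq> Eset E v"
  proof
    fix v assume "v \<in> V" thus "Ep' v \<subseteq> Eset E v" using I4 Ep'sub[of v] by auto
  qed
  have P5: "\<forall>v\<in>V - trm'. Eset E v - cov' \<subseteq> Ep' v"
    using uncov unfolding trm'_def act_def by auto
  have P6: "\<forall>v\<in>V - trm'. (\<Sum>e\<in>Ep' v. deal' e) \<le> \<beta> * w v"
    using key unfolding trm'_def act_def by auto
  have P7: "(\<Sum>e\<in>Eset E v. dlt' e) \<le> w v" if vV: "v \<in> V" for v
  proof (cases "v \<in> trm'")
    case True
    hence "(\<Sum>e\<in>Eset E v. dlt' e) = (\<Sum>e\<in>Eset E v. dlt s e)"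
      using covtrm dlt_eq by (intro sum.cong) auto
    thus ?thesis using I7 vV by simp
  next
    case False
    hence va: "v \<in> act" using vV unfolding trm'_def act_def by auto
    hence lt: "(\<Sum>e\<in>Eset E v. dlt s e) < (1 - \<beta>) * w v" using vV unfolding act_def J_def by auto
    have "(\<Sum>e\<in>Eset E v. dlt' e) = (\<Sum>e\<in>Eset E v. dlt s e + (if e \<in> cov' then 0 else deal' e))"
      unfolding dlt'_def by (intro sum.cong) (auto simp: Eset_def)
    also have "\<dots> = (\<Sum>e\<in>Eset E v. dlt s e) + (\<Sum>e\<in>Eset E v. (if e \<in> cov' then 0 else deal' e))"
      by (simp add: sum.distrib)
    also have "(\<Sum>e\<in>Eset E v. (if e \<in> cov' then 0 else deal' e)) = (\<Sum>e\<in>Eset E v - cov'. deal' e)"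
      using fEs by (simp add: sum.If_cases Diff_eq)
    also have "\<dots> \<le> (\<Sum>e\<in>Ep' v. deal' e)"
    proof (rule sum_mono2[OF _ uncov[OF va]])
      have "Ep' v \<subseteq> Eset E v" using P4 vV by simp
      thus "finite (Ep' v)" using fEs by (rule finite_subset)
      fix b assume "b \<in> Ep' v - (Eset E v - cov')"
      hence "b \<in> E" using \<open>Ep' v \<subseteq> Eset E v\<close> unfolding Eset_def by auto
      thus "0 \<le> deal' b" by (rule dealnn)
    qed
    also have "\<dots> \<le> \<beta> * w v" using key va by simp
    finally show ?thesis using lt by (simp add: algebra_simps)
  qed
  have P10: "\<forall>v\<in>inC s \<union> J. v \<in> V \<and> Eset E v \<noteq> {} \<and> (1-\<beta>) * w v \<le> (\<Sum>e\<in>Eset E v. dlt' e)"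
  proof
    fix v assume v: "v \<in> inC s \<union> J"
    have vt: "v \<in> trm'"
    proof (cases "v \<in> J")
      case True thus ?thesis unfolding trm'_def by auto
    next
      case False
      hence "v \<in> inC s" using v by auto
      thus ?thesis using I12 unfolding trm'_def by auto
    qed
    have "(\<Sum>e\<in>Eset E v. dlt' e) = (\<Sum>e\<in>Eset E v. dlt s e)"
      using covtrm[OF vt] dlt_eq by (intro sum.cong) auto
    thus "v \<in> V \<and> Eset E v \<noteq> {} \<and> (1-\<beta>) * w v \<le> (\<Sum>e\<in>Eset E v. dlt' e)"
      using v I10 I9 unfolding J_def by auto
  qed
  have P11: "\<forall>e\<in>cov'. e \<inter> (inC s \<union> J) \<noteq> {}"
  proof
    fix e assume e: "e \<in> cov'"
    show "e \<inter> (inC s \<union> J) \<noteq> {}"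
    proof (cases "e \<in> cov s")
      case True thus ?thesis using I11 by auto
    next
      case False
      then obtain v where "v \<in> J" "e \<in> Ep s v" using e unfolding cov'_def N_def by auto
      moreover have "v \<in> e" using calculation I4 unfolding J_def Eset_def by auto
      ultimately show ?thesis by auto
    qed
  qed
  show ?thesis unfolding eq minv_def mwhvc_state.simps
  proof (intro conjI)
    show "inC s \<union> J \<subseteq> trm'" using I12 unfolding trm'_def by auto
    show "\<forall>v\<in>V. Eset E v = {} \<longrightarrow> v \<in> trm'" using I9 unfolding trm'_def by auto
    show "\<forall>e\<in>E. 0 \<le> deal' e \<and> 0 \<le> dlt' e" using dealnn dltnn by blast
    show "\<forall>v\<in>V. (\<Sum>e\<in>Eset E v. dlt' e) \<le> w v" using P7 by blast
    show "\<forall>v\<in>trm'. Eset E v \<subseteq> cov'" using covtrm by blast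
  qed (fact trm'V cov'E P4 P5 P6 P10 P11)+
qed


lemma inv_all:
  assumes fV: "finite V" and hE: "\<forall>e\<in>E. e \<noteq> {} \<and> e \<subseteq> V"
    and hw: "\<forall>v\<in>V. w v \<ge> 0" and b0: "0 \<le> \<beta>" and b1: "\<beta> \<le> 1" and a1: "1 \<le> \<alpha>"
  shows "minv V E w \<beta> (mwhvc V E w \<beta> \<alpha> i)"
proof (induction i)
  case 0 show ?case using inv_init[OF fV hE hw b0 b1] by simp
next
  case (Suc i) thus ?case using inv_step[OF fV hE hw b0 b1 a1] by simp
qed

lemma swap_sum:
  assumes fV: "finite V" and fE: "finite E" and hE: "\<forall>e\<in>E. e \<subseteq> V"
  shows "(\<Sum>e\<in>E. \<Sum>v\<in>e. g e v) = (\<Sum>v\<in>V. \<Sum>e\<in>Eset E v. g e v)"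
proof -
  have "(\<Sum>e\<in>E. \<Sum>v\<in>{v. v \<in> V \<and> v \<in> e}. g e v) = (\<Sum>v\<in>V. \<Sum>e\<in>{e. e \<in> E \<and> v \<in> e}. g e v)"
    by (rule sum.swap_restrict[OF fE fV])
  moreover have "(\<Sum>e\<in>E. \<Sum>v\<in>{v. v \<in> V \<and> v \<in> e}. g e v) = (\<Sum>e\<in>E. \<Sum>v\<in>e. g e v)"
  proof (rule sum.cong)
    fix e assume "e \<in> E"
    hence "{v. v \<in> V \<and> v \<in> e} = e" using hE by auto
    thus "(\<Sum>v\<in>{v. v \<in> V \<and> v \<in> e}. g e v) = (\<Sum>v\<in>e. g e v)" by simp
  qed simp
  ultimately show ?thesis unfolding Eset_def by simp
qed

theorem mainTheorem3:
  fixes V :: "'v set" and E :: "'v set set" and w :: "'v \<Rightarrow> real"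
    and f :: nat and \<epsilon> \<alpha> :: real and i :: nat
  assumes "finite V"
    and "\<forall>e\<in>E. e \<noteq> {} \<and> e \<subseteq> V \<and> card e \<le> f"
    and "\<forall>v\<in>V. w v \<ge> 0"
    and "max_degree V E \<ge> 3"
    and "0 < \<epsilon>" and "\<epsilon> \<le> 1"
    and "\<alpha> > 1"
    and "mwhvc_terminated V E (mwhvc V E w (\<epsilon> / (real f + \<epsilon>)) \<alpha> i)"
  shows "(\<forall>e\<in>E. e \<inter> inC (mwhvc V E w (\<epsilon> / (real f + \<epsilon>)) \<alpha> i) \<noteq> {})
       \<and> (\<Sum>v\<in>inC (mwhvc V E w (\<epsilon> / (real f + \<epsilon>)) \<alpha> i). w v)
           \<le> (real f + \<epsilon>) * opt_frac V E w"
proof -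
  define \<beta> where "\<beta> = \<epsilon> / (real f + \<epsilon>)"
  define s where "s = mwhvc V E w \<beta> \<alpha> i"
  have fV: "finite V" using assms(1) .
  have hE: "\<forall>e\<in>E. e \<noteq> {} \<and> e \<subseteq> V" using assms(2) by blast
  have hE2: "\<forall>e\<in>E. e \<subseteq> V" using hE by blast
  have hw: "\<forall>v\<in>V. w v \<ge> 0" using assms(3) .
  have fE: "finite E" using finE[OF fV hE2] .
  have fe: "finite e" if "e \<in> E" for e using hE that fV finite_subset by metis
  have fpos: "0 < real f + \<epsilon>" using assms(5) by simp
  have b0: "0 \<le> \<beta>" unfolding \<beta>_def using assms(5) fpos by simp
  have b1: "\<beta> \<le> 1" unfolding \<beta>_def using assms(5) fpos by simp
  have a1: "1 \<le> \<alpha>" using assms(7) by simp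
  have I: "minv V E w \<beta> s" unfolding s_def by (rule inv_all[OF fV hE hw b0 b1 a1])
  have trmV: "V \<subseteq> trm s" "E \<subseteq> cov s" using assms(8) unfolding s_def \<beta>_def mwhvc_terminated_def by auto
  have I3: "\<forall>e\<in>E. 0 \<le> deal s e \<and> 0 \<le> dlt s e"
    and I7: "\<forall>v\<in>V. (\<Sum>e\<in>Eset E v. dlt s e) \<le> w v"
    and I10: "\<forall>v\<in>inC s. v \<in> V \<and> Eset E v \<noteq> {} \<and> (1-\<beta>) * w v \<le> (\<Sum>e\<in>Eset E v. dlt s e)"
    and I11: "\<forall>e\<in>cov s. e \<inter> inC s \<noteq> {}"
    using I unfolding minv_def apply - apply (elim conjE; assumption)+ done
  have cover: "\<forall>e\<in>E. e \<inter> inC s \<noteq> {}" using I11 trmV(2) by blast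
  define D where "D = (\<Sum>e\<in>E. dlt s e)"
  let ?S = "{(\<Sum>v\<in>V. w v * x v) | x. frac_cover E x}"
  have Sne: "?S \<noteq> {}"
  proof -
    have "frac_cover E (\<lambda>_. 1)" unfolding frac_cover_def
    proof (intro conjI ballI allI)
      fix e assume e: "e \<in> E"
      have "card e \<ge> 1" using fe[OF e] hE e by (simp add: Suc_le_eq card_gt_0_iff)
      thus "1 \<le> (\<Sum>v\<in>e. (1::real))" by simp
    qed simp
    thus ?thesis by blast
  qed
  have Dle: "D \<le> y" if "y \<in> ?S" for y
  proof -
    obtain x where y: "y = (\<Sum>v\<in>V. w v * x v)" and x: "frac_cover E x" using \<open>y \<in> ?S\<close> by blast
    have xnn: "\<forall>v. 0 \<le> x v" and xc: "\<forall>e\<in>E. 1 \<le> (\<Sum>v\<in>e. x v)" using x unfolding frac_cover_def by auto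
    have "D \<le> (\<Sum>e\<in>E. dlt s e * (\<Sum>v\<in>e. x v))" unfolding D_def
    proof (rule sum_mono)
      fix e assume e: "e \<in> E"
      show "dlt s e \<le> dlt s e * (\<Sum>v\<in>e. x v)"
        using I3 e xc mult_left_mono[of 1 "\<Sum>v\<in>e. x v" "dlt s e"] by simp
    qed
    also have "\<dots> = (\<Sum>e\<in>E. \<Sum>v\<in>e. dlt s e * x v)" by (simp add: sum_distrib_left)
    also have "\<dots> = (\<Sum>v\<in>V. \<Sum>e\<in>Eset E v. dlt s e * x v)" by (rule swap_sum[OF fV fE hE2])
    also have "\<dots> = (\<Sum>v\<in>V. x v * (\<Sum>e\<in>Eset E v. dlt s e))"
      by (simp add: sum_distrib_left mult.commute)
    also have "\<dots> \<le> (\<Sum>v\<in>V. x v * w v)"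
    proof (rule sum_mono)
      fix v assume "v \<in> V"
      thus "x v * (\<Sum>e\<in>Eset E v. dlt s e) \<le> x v * w v" using I7 xnn by (simp add: mult_left_mono)
    qed
    also have "\<dots> = y" unfolding y by (simp add: mult.commute)
    finally show ?thesis .
  qed
  have Dopt: "D \<le> opt_frac V E w" unfolding opt_frac_def by (rule cInf_greatest[OF Sne Dle])
  have Dnn: "0 \<le> D" unfolding D_def using I3 by (simp add: sum_nonneg)
  have wC: "(\<Sum>v\<in>inC s. w v) \<le> (real f + \<epsilon>) * D"
  proof (cases "inC s = {}")
    case True thus ?thesis using Dnn fpos by simp
  next
    case False
    then obtain v0 where v0: "v0 \<in> inC s" by blast
    then obtain e0 where e0: "e0 \<in> Eset E v0" using I10 by blast
    have e0E: "e0 \<in> E" using e0 unfolding Eset_def by simp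
    have "1 \<le> card e0" using fe[OF e0E] hE e0E by (simp add: Suc_le_eq card_gt_0_iff)
    also have "card e0 \<le> f" using assms(2) e0E by blast
    finally have f1: "1 \<le> f" .
    have fr: "0 < real f" using f1 by simp
    have omb: "1 - \<beta> = real f / (real f + \<epsilon>)" unfolding \<beta>_def using fpos by (simp add: field_simps)
    have CV: "inC s \<subseteq> V" using I10 by blast
    have wv: "w v \<le> ((real f + \<epsilon>) / real f) * (\<Sum>e\<in>Eset E v. dlt s e)" if v: "v \<in> inC s" for v
    proof -
      have "real f / (real f + \<epsilon>) * w v \<le> (\<Sum>e\<in>Eset E v. dlt s e)" using I10 v omb by simp
      hence "real f * w v \<le> (real f + \<epsilon>) * (\<Sum>e\<in>Eset E v. dlt s e)" using fpos by (simp add: field_simps)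
      thus ?thesis using fr by (simp add: field_simps)
    qed
    have Snn: "0 \<le> (\<Sum>e\<in>Eset E v. dlt s e)" for v using I3 by (intro sum_nonneg) (auto simp: Eset_def)
    have T: "(\<Sum>v\<in>V. \<Sum>e\<in>Eset E v. dlt s e) \<le> real f * D"
    proof -
      have "(\<Sum>v\<in>V. \<Sum>e\<in>Eset E v. dlt s e) = (\<Sum>e\<in>E. \<Sum>v\<in>e. dlt s e)"
        by (rule swap_sum[OF fV fE hE2, symmetric])
      also have "\<dots> = (\<Sum>e\<in>E. real (card e) * dlt s e)" by simp
      also have "\<dots> \<le> (\<Sum>e\<in>E. real f * dlt s e)"
      proof (rule sum_mono)
        fix e assume e: "e \<in> E"
        have "real (card e) \<le> real f" using assms(2) e by simp
        thus "real (card e) * dlt s e \<le> real f * dlt s e" using I3 e by (simp add: mult_right_mono)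
      qed
      also have "\<dots> = real f * D" unfolding D_def by (simp add: sum_distrib_left)
      finally show ?thesis .
    qed
    have "(\<Sum>v\<in>inC s. w v) \<le> (\<Sum>v\<in>inC s. ((real f + \<epsilon>) / real f) * (\<Sum>e\<in>Eset E v. dlt s e))"
      by (rule sum_mono) (rule wv)
    also have "\<dots> \<le> (\<Sum>v\<in>V. ((real f + \<epsilon>) / real f) * (\<Sum>e\<in>Eset E v. dlt s e))"
    proof (rule sum_mono2[OF fV CV])
      fix b show "0 \<le> (real f + \<epsilon>) / real f * (\<Sum>e\<in>Eset E b. dlt s e)"
        using fpos fr Snn by simp
    qed
    also have "\<dots> = ((real f + \<epsilon>) / real f) * (\<Sum>v\<in>V. \<Sum>e\<in>Eset E v. dlt s e)"
      by (simp add: sum_distrib_left)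
    also have "\<dots> \<le> ((real f + \<epsilon>) / real f) * (real f * D)"
      using T fpos fr by (intro mult_left_mono) auto
    finally have "(\<Sum>v\<in>inC s. w v) \<le> (real f + \<epsilon>) / real f * (real f * D)" .
    thus ?thesis using fr by simp
  qed
  have "(real f + \<epsilon>) * D \<le> (real f + \<epsilon>) * opt_frac V E w"
    using Dopt fpos by (simp add: mult_left_mono)
  with wC cover show ?thesis unfolding s_def \<beta>_def by simp
qed

end
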